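(* Let $\mathfrak X=(\mathbb R,d_{\rm e},\mu)$, where $d_{\rm e}$ is the Euclidean metric and $\mu$ is a Borel measure such that every open interval (ball) has finite strictly positive measure. Then the noncentered maximal operator $\mathcal M_{\mathfrak X}$ possesses the dichotomy property.
   Context: $L^1_{\rm loc}(\mu)$: functions integrable on every open ball. $\mathcal Mf(x)=\sup_{B\ni x}\mu(B)^{-1}\int_B|f|d\mu$ over open balls containing $x$. $\mathcal M$ possesses the dichotomy property if for every $f\in L^1_{\rm loc}(\mu)$ either $\mu(\{\mathcal Mf=\infty\})=0$ or $\mathcal Mf(x)=\infty$ for all $x\in X$. *)

theory Defs
  imports "HOL-Analysis.Analysis"
begin

definition loc_integrable :: "'a::metric_space measure \<Rightarrow> ('a \<Rightarrow> real) \<Rightarrow> bool" where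
  "loc_integrable M f \<longleftrightarrow> (\<forall>c r. 0 < r \<longrightarrow> set_integrable M (ball c r) f)"

definition max_op :: "'a::metric_space measure \<Rightarrow> ('a \<Rightarrow> real) \<Rightarrow> 'a \<Rightarrow> ennreal" where
  "max_op M f x = (SUP B \<in> {ball c r | c r. 0 < r \<and> x \<in> ball c r}.
       (\<integral>\<^sup>+ y \<in> B. ennreal \<bar>f y\<bar> \<partial>M) / emeasure M B)"

definition dichotomy_property :: "'a::metric_space measure \<Rightarrow> bool" where
  "dichotomy_property M \<longleftrightarrow>
     (\<forall>f. loc_integrable M f \<longrightarrow>
        emeasure M {x \<in> space M. max_op M f x = \<infinity>} = 0 \<or> (\<forall>x. max_op M f x = \<infinity>))"

end

theory Submission
  imports Defs
begin


lemma int_cover: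
  fixes x :: real
  assumes "a2 < x" "x < b2" "a3 < x" "x < b3" "min a2 a3 \<le> a1" "b1 \<le> max b2 b3"
  shows "{a1<..<b1} \<subseteq> {a2<..<b2} \<union> {a3<..<b3}"
  using assms by (auto simp: min_def max_def split: if_splits)

lemma three_mm:
  fixes a1 a2 a3 b1 b2 b3 :: real
  shows "(min a2 a3 \<le> a1 \<and> b1 \<le> max b2 b3) \<or> (min a1 a3 \<le> a2 \<and> b2 \<le> max b1 b3)
     \<or> (min a1 a2 \<le> a3 \<and> b3 \<le> max b1 b2)"
  by (cases "a1 \<le> a2"; cases "a1 \<le> a3"; cases "a2 \<le> a3"; cases "b1 \<le> b2"; cases "b1 \<le> b3"; cases "b2 \<le> b3";
      simp add: min_def max_def)

lemma three_balls:
  fixes x :: real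
  assumes "x \<in> ball c1 r1" "x \<in> ball c2 r2" "x \<in> ball c3 r3"
  shows "ball c1 r1 \<subseteq> ball c2 r2 \<union> ball c3 r3 \<or> ball c2 r2 \<subseteq> ball c1 r1 \<union> ball c3 r3
     \<or> ball c3 r3 \<subseteq> ball c1 r1 \<union> ball c2 r2"
proof -
  have m: "c1 - r1 < x" "x < c1 + r1" "c2 - r2 < x" "x < c2 + r2" "c3 - r3 < x" "x < c3 + r3"
    using assms by (auto simp: ball_eq_greaterThanLessThan)
  note mm = three_mm[of "c1 - r1" "c2 - r2" "c3 - r3" "c1 + r1" "c2 + r2" "c3 + r3"]
  show ?thesis unfolding ball_eq_greaterThanLessThan
  proof -
    consider "min (c2 - r2) (c3 - r3) \<le> c1 - r1 \<and> c1 + r1 \<le> max (c2 + r2) (c3 + r3)"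
      | "min (c1 - r1) (c3 - r3) \<le> c2 - r2 \<and> c2 + r2 \<le> max (c1 + r1) (c3 + r3)"
      | "min (c1 - r1) (c2 - r2) \<le> c3 - r3 \<and> c3 + r3 \<le> max (c1 + r1) (c2 + r2)"
      using mm by argo
    then show "{c1 - r1<..<c1 + r1} \<subseteq> {c2 - r2<..<c2 + r2} \<union> {c3 - r3<..<c3 + r3} \<or>
      {c2 - r2<..<c2 + r2} \<subseteq> {c1 - r1<..<c1 + r1} \<union> {c3 - r3<..<c3 + r3} \<or>
      {c3 - r3<..<c3 + r3} \<subseteq> {c1 - r1<..<c1 + r1} \<union> {c2 - r2<..<c2 + r2}"
    proof cases
      case 1 then show ?thesis using int_cover[of "c2 - r2" x "c2 + r2" "c3 - r3" "c3 + r3" "c1 - r1" "c1 + r1"] m by simp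
    next
      case 2 then show ?thesis using int_cover[of "c1 - r1" x "c1 + r1" "c3 - r3" "c3 + r3" "c2 - r2" "c2 + r2"] m by simp
    next
      case 3 then show ?thesis using int_cover[of "c1 - r1" x "c1 + r1" "c2 - r2" "c2 + r2" "c3 - r3" "c3 + r3"] m by simp
    qed
  qed
qed

lemma three_elems:
  assumes "finite S" "2 < card S"
  obtains a b c where "a \<in> S" "b \<in> S" "c \<in> S" "a \<noteq> b" "a \<noteq> c" "b \<noteq> c"
proof -
  have "S \<noteq> {}" using assms by (metis card.empty not_less_zero)
  then obtain a where a: "a \<in> S" by blast
  have c1: "1 < card (S - {a})" using assms a by (simp add: card_Diff_singleton)
  have "S - {a} \<noteq> {}" using c1 by (metis card.empty not_less_zero)
  then obtain b where b: "b \<in> S - {a}" by blast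
  have c2: "0 < card (S - {a} - {b})" using c1 b assms by (simp add: card_Diff_singleton)
  have "S - {a} - {b} \<noteq> {}" using c2 by (metis card.empty less_irrefl)
  then obtain c where c: "c \<in> S - {a} - {b}" by blast
  show ?thesis by (rule that[of a b c]) (use a b c in auto)
qed

lemma overlap_select:
  fixes F :: "real set set"
  assumes "finite F" "\<forall>B\<in>F. \<exists>c r. B = ball c r" "K \<subseteq> \<Union>F"
  shows "\<exists>G \<subseteq> F. K \<subseteq> \<Union>G \<and> (\<forall>x. card {B\<in>G. x \<in> B} \<le> 2)"
proof -
  obtain G where G: "G \<subseteq> F \<and> K \<subseteq> \<Union>G" and Gmin: "\<forall>H. H \<subseteq> F \<and> K \<subseteq> \<Union>H \<longrightarrow> card G \<le> card H"
    using ex_has_least_nat[of "\<lambda>G. G \<subseteq> F \<and> K \<subseteq> \<Union>G" F card] assms by blast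
  have finG: "finite G" using G assms(1) finite_subset by blast
  have "card {B\<in>G. x \<in> B} \<le> 2" for x
  proof (rule ccontr)
    assume "\<not> ?thesis"
    have fin2: "finite {B\<in>G. x \<in> B}" using finG by simp
    have c3: "2 < card {B\<in>G. x \<in> B}" using \<open>\<not> card {B\<in>G. x \<in> B} \<le> 2\<close> by simp
    obtain B1 B2 B3 where B: "B1 \<in> {B\<in>G. x \<in> B}" "B2 \<in> {B\<in>G. x \<in> B}" "B3 \<in> {B\<in>G. x \<in> B}"
      "B1 \<noteq> B2" "B1 \<noteq> B3" "B2 \<noteq> B3"
      by (rule three_elems[OF fin2 c3])
    have "\<exists>c r. B1 = ball c r" "\<exists>c r. B2 = ball c r" "\<exists>c r. B3 = ball c r"
      using B G assms(2) by blast+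
    then obtain c1 r1 c2 r2 c3 r3 where e: "B1 = ball c1 r1" "B2 = ball c2 r2" "B3 = ball c3 r3"
      by blast
    have tb: "B1 \<subseteq> B2 \<union> B3 \<or> B2 \<subseteq> B1 \<union> B3 \<or> B3 \<subseteq> B1 \<union> B2"
      using three_balls[of x c1 r1 c2 r2 c3 r3] B unfolding e by simp
    obtain Bi Bj Bk where h: "Bi\<in>G" "Bj\<in>G" "Bk\<in>G" "Bi \<noteq> Bj" "Bi \<noteq> Bk" "Bi \<subseteq> Bj \<union> Bk"
    proof -
      from tb consider "B1 \<subseteq> B2 \<union> B3" | "B2 \<subseteq> B1 \<union> B3" | "B3 \<subseteq> B1 \<union> B2" by blast
      then show ?thesis
      proof cases
        case 1 then show ?thesis using that[of B1 B2 B3] B(1-6) by auto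
      next
        case 2 then show ?thesis using that[of B2 B1 B3] B(1-6) by auto
      next
        case 3 then show ?thesis using that[of B3 B1 B2] B(1-6) by auto
      qed
    qed
    have "\<Union>(G - {Bi}) = \<Union>G" using h by blast
    hence "G - {Bi} \<subseteq> F \<and> K \<subseteq> \<Union>(G - {Bi})" using G by blast
    hence "card G \<le> card (G - {Bi})" using Gmin by blast
    moreover have "card (G - {Bi}) < card G" using card_Diff1_less[OF finG h(1)] .
    ultimately show False by simp
  qed
  thus ?thesis using G by blast
qed



lemma sum_ind_card:
  assumes "finite G"
  shows "(\<Sum>B\<in>G. indicator B y :: ennreal) = of_nat (card {B\<in>G. y \<in> B})"
proof -
  have "(\<Sum>B\<in>G. indicator B y :: ennreal) = (\<Sum>B\<in>G. if y \<in> B then 1 else 0)"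
    by (intro sum.cong) (auto simp: indicator_def)
  also have "\<dots> = (\<Sum>B\<in>{B\<in>G. y \<in> B}. 1)"
    using assms by (rule sum.inter_filter[symmetric])
  also have "\<dots> = of_nat (card {B\<in>G. y \<in> B})" by simp
  finally show ?thesis .
qed

lemma weak_type:
  fixes M :: "real measure" and g :: "real \<Rightarrow> ennreal" and lam :: real
  assumes sb: "sets M = sets borel"
    and fin: "emeasure M W < \<infinity>" and Wb: "W \<in> sets borel"
    and g: "g \<in> borel_measurable M" and lam: "0 < lam"
  shows "ennreal lam * emeasure M (\<Union>{B. (\<exists>c r. 0<r \<and> B = ball c r) \<and> B \<subseteq> W \<and>
      ennreal lam * emeasure M B < (\<integral>\<^sup>+y\<in>B. g y \<partial>M)}) \<le> 2 * (\<integral>\<^sup>+y. g y \<partial>M)"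
proof -
  define \<B> where "\<B> = {B. (\<exists>c r. 0<r \<and> B = ball c r) \<and> B \<subseteq> W \<and>
      ennreal lam * emeasure M B < (\<integral>\<^sup>+y\<in>B. g y \<partial>M)}"
  define U where "U = \<Union>\<B>"
  have opB: "open B" if "B \<in> \<B>" for B using that unfolding \<B>_def by auto
  have Uo: "open U" unfolding U_def using opB by auto
  have UW: "U \<subseteq> W" unfolding U_def \<B>_def by auto
  have setsB: "B \<in> sets M" if "B \<in> \<B>" for B using opB[OF that] sb by simp
  have UM: "U \<in> sets M" using Uo sb by simp
  have WM: "W \<in> sets M" using Wb sb by simp
  define M' where "M' = density M (indicator W)"
  have sM': "sets M' = sets borel" unfolding M'_def using sb by simp
  have em': "emeasure M' A = emeasure M (W \<inter> A)" if "A \<in> sets borel" for A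
  proof -
    have AM: "A \<in> sets M" using that sb by simp
    have "emeasure M' A = (\<integral>\<^sup>+ x. indicator W x * indicator A x \<partial>M)"
      unfolding M'_def by (rule emeasure_density) (use WM AM in auto)
    also have "\<dots> = (\<integral>\<^sup>+ x. indicator (W \<inter> A) x \<partial>M)"
      by (intro nn_integral_cong) (simp add: indicator_inter_arith)
    also have "\<dots> = emeasure M (W \<inter> A)" using WM AM by simp
    finally show ?thesis .
  qed
  have spM': "space M' = UNIV" using sM' by (metis sets_eq_imp_space_eq space_borel)
  have finM': "emeasure M' (space M') \<noteq> \<infinity>"
    using em'[of UNIV] fin spM' by simp
  have inner: "emeasure M' U = (SUP K \<in> {K. K \<subseteq> U \<and> compact K}. emeasure M' K)"
    by (rule inner_regular[OF sM' finM']) (use Uo in simp)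
  have eU: "emeasure M' U = emeasure M U" using em'[of U] Uo UW
    by (simp add: Int_absorb1)
  have key: "ennreal lam * emeasure M' K \<le> 2 * (\<integral>\<^sup>+y. g y \<partial>M)" if K: "K \<subseteq> U" "compact K" for K
  proof -
    obtain T where T: "T \<subseteq> \<B>" "finite T" "K \<subseteq> \<Union>T"
      using compactE[OF K(2), of \<B>] K(1) opB unfolding U_def by blast
    have balls: "\<forall>B\<in>T. \<exists>c r. B = ball c r" using T(1) unfolding \<B>_def by blast
    obtain G where G: "G \<subseteq> T" "K \<subseteq> \<Union>G" "\<forall>x. card {B\<in>G. x \<in> B} \<le> 2"
      using overlap_select[OF T(2) balls T(3)] by blast
    have finG: "finite G" using G(1) T(2) finite_subset by blast
    have GB: "G \<subseteq> \<B>" using G(1) T(1) by blast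
    have "emeasure M' K = emeasure M (W \<inter> K)"
      using em'[of K] K(2) compact_imp_closed borel_closed by blast
    also have "\<dots> \<le> emeasure M (\<Union>G)"
      by (rule emeasure_mono) (use G(2) finG GB setsB in auto)
    also have "\<dots> \<le> (\<Sum>B\<in>G. emeasure M B)"
      using emeasure_subadditive_finite[OF finG, of "\<lambda>B. B" M] GB setsB by auto
    finally have "ennreal lam * emeasure M' K \<le> ennreal lam * (\<Sum>B\<in>G. emeasure M B)"
      by (rule mult_left_mono) simp
    also have "\<dots> = (\<Sum>B\<in>G. ennreal lam * emeasure M B)" by (simp add: sum_distrib_left)
    also have "\<dots> \<le> (\<Sum>B\<in>G. (\<integral>\<^sup>+y. g y * indicator B y \<partial>M))"
      by (rule sum_mono) (use GB in \<open>auto simp: \<B>_def intro: less_imp_le\<close>)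
    also have "\<dots> = (\<integral>\<^sup>+y. (\<Sum>B\<in>G. g y * indicator B y) \<partial>M)"
      by (rule nn_integral_sum[symmetric]) (use g GB setsB in auto)
    also have "\<dots> \<le> (\<integral>\<^sup>+y. 2 * g y \<partial>M)"
    proof (rule nn_integral_mono)
      fix y
      have "(\<Sum>B\<in>G. g y * indicator B y) = g y * (\<Sum>B\<in>G. indicator B y)"
        by (simp add: sum_distrib_left)
      also have "\<dots> = g y * of_nat (card {B\<in>G. y \<in> B})" using sum_ind_card[OF finG] by simp
      also have "\<dots> \<le> g y * 2"
      proof (rule mult_left_mono)
        have "of_nat (card {B\<in>G. y \<in> B}) \<le> (of_nat 2 :: ennreal)"
          using G(3) of_nat_le_iff by blast
        thus "of_nat (card {B\<in>G. y \<in> B}) \<le> (2::ennreal)" by simp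
      qed simp
      finally show "(\<Sum>B\<in>G. g y * indicator B y) \<le> 2 * g y" by (simp add: mult.commute)
    qed
    also have "\<dots> = 2 * (\<integral>\<^sup>+y. g y \<partial>M)" using g by (simp add: nn_integral_cmult)
    finally show ?thesis .
  qed
  have "ennreal lam * emeasure M U = (SUP K \<in> {K. K \<subseteq> U \<and> compact K}. ennreal lam * emeasure M' K)"
    using inner eU by (simp add: SUP_mult_left_ennreal)
  also have "\<dots> \<le> 2 * (\<integral>\<^sup>+y. g y \<partial>M)"
    by (rule SUP_least) (use key in auto)
  finally show ?thesis unfolding U_def \<B>_def .
qed



lemma li_props:
  fixes M :: "real measure"
  assumes "loc_integrable M f" "0 < r"
  shows "(\<lambda>y. ennreal \<bar>f y\<bar> * indicator (ball c r) y) \<in> borel_measurable M"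
    and "(\<integral>\<^sup>+y\<in>ball c r. ennreal \<bar>f y\<bar> \<partial>M) < \<infinity>"
proof -
  have si: "integrable M (\<lambda>x. indicator (ball c r) x *\<^sub>R f x)"
    using assms unfolding loc_integrable_def set_integrable_def by blast
  have eq: "(\<lambda>y. ennreal \<bar>f y\<bar> * indicator (ball c r) y) = (\<lambda>x. ennreal (norm (indicator (ball c r) x *\<^sub>R f x)))"
    by (rule ext) (auto simp: indicator_def)
  have m: "(\<lambda>x. indicator (ball c r) x *\<^sub>R f x) \<in> borel_measurable M" using si by (simp add: integrable_iff_bounded)
  show "(\<lambda>y. ennreal \<bar>f y\<bar> * indicator (ball c r) y) \<in> borel_measurable M"
    unfolding eq using m by measurable
  show "(\<integral>\<^sup>+y\<in>ball c r. ennreal \<bar>f y\<bar> \<partial>M) < \<infinity>"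
    unfolding eq using si by (simp add: integrable_iff_bounded)
qed

lemma ball_meas:
  fixes M :: "real measure"
  assumes pos: "\<And>c r. 0 < r \<Longrightarrow> 0 < emeasure M (ball c r) \<and> emeasure M (ball c r) < \<infinity>"
    and "0 < r"
  shows "emeasure M (ball c r) = ennreal (measure M (ball c r))" "0 < measure M (ball c r)"
proof -
  have h: "0 < emeasure M (ball c r)" "emeasure M (ball c r) < \<infinity>" using pos assms(2) by auto
  show e: "emeasure M (ball c r) = ennreal (measure M (ball c r))"
    using h by (intro emeasure_eq_ennreal_measure) simp
  show "0 < measure M (ball c r)" using h e by (metis ennreal_less_zero_iff)
qed



lemma localize:
  fixes M :: "real measure" and f :: "real \<Rightarrow> real"
  assumes sb: "sets M = sets borel"
    and pos: "\<And>c r. 0 < r \<Longrightarrow> 0 < emeasure M (ball c r) \<and> emeasure M (ball c r) < \<infinity>"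
    and li: "loc_integrable M f"
    and K: "max_op M f y = ennreal K" "0 \<le> K"
    and n: "0 < n" and x: "\<bar>x\<bar> < n" and xinf: "max_op M f x = \<infinity>"
    and lam: "0 < lam"
  shows "\<exists>B. (\<exists>c r. 0<r \<and> B = ball c r) \<and> B \<subseteq> ball 0 (n + \<bar>y\<bar> + 3) \<and> x \<in> B \<and>
      ennreal lam * emeasure M B < (\<integral>\<^sup>+z\<in>B. ennreal \<bar>f z\<bar> * indicator (ball 0 (n + \<bar>y\<bar> + 3)) z \<partial>M)"
proof -
  define R where "R = n + \<bar>y\<bar> + 3"
  define W0 where "W0 = ball (0::real) (n + \<bar>y\<bar> + 2)"
  define C where "C = measure M W0"
  have W0e: "emeasure M W0 = ennreal C" "0 \<le> C"
    unfolding C_def W0_def using ball_meas[OF pos, of "n + \<bar>y\<bar> + 2" 0] n by auto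
  define \<delta>1 where "\<delta>1 = measure M (ball (x + 1/2) (1/2))"
  define \<delta>2 where "\<delta>2 = measure M (ball (x - 1/2) (1/2))"
  have d1: "emeasure M (ball (x + 1/2) (1/2)) = ennreal \<delta>1" "0 < \<delta>1"
    unfolding \<delta>1_def using ball_meas[OF pos, of "1/2"] by auto
  have d2: "emeasure M (ball (x - 1/2) (1/2)) = ennreal \<delta>2" "0 < \<delta>2"
    unfolding \<delta>2_def using ball_meas[OF pos, of "1/2"] by auto
  define \<delta> where "\<delta> = min \<delta>1 \<delta>2"
  have dpos: "0 < \<delta>" using d1 d2 unfolding \<delta>_def by simp
  define lam' where "lam' = lam + K + K * C / \<delta> + 1"
  have kcd: "0 \<le> K * C / \<delta>" using K(2) W0e(2) dpos by simp
  have "ennreal lam' < max_op M f x" using xinf by simp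
  then obtain B where Bin: "B \<in> {ball c r | c r. 0 < r \<and> x \<in> ball c r}"
    and Blt: "ennreal lam' < (\<integral>\<^sup>+ z\<in>B. ennreal \<bar>f z\<bar> \<partial>M) / emeasure M B"
    unfolding max_op_def less_SUP_iff by blast
  then obtain c r where B: "B = ball c r" "0 < r" "x \<in> ball c r" by blast
  define iR where "iR = enn2real (\<integral>\<^sup>+ z\<in>B. ennreal \<bar>f z\<bar> \<partial>M)"
  have iB: "(\<integral>\<^sup>+ z\<in>B. ennreal \<bar>f z\<bar> \<partial>M) = ennreal iR" "0 \<le> iR"
    unfolding iR_def B(1) using li_props(2)[OF li B(2), of c] by (auto simp: less_top)
  define mR where "mR = measure M B"
  have mB: "emeasure M B = ennreal mR" "0 < mR"
    unfolding mR_def B(1) using ball_meas[OF pos B(2)] by auto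
  have "ennreal lam' < ennreal (iR / mR)"
    using Blt iB mB divide_ennreal[of iR mR] by simp
  moreover have "0 \<le> lam'" unfolding lam'_def using lam K(2) kcd by simp
  ultimately have "lam' < iR / mR" by (simp add: ennreal_less_iff)
  hence ineq1: "lam' * mR < iR" using mB(2) by (simp add: pos_less_divide_eq)
  define lo where "lo = min (c - r) (y - 1)"
  define hi where "hi = max (c + r) (y + 1)"
  define d where "d = (lo + hi) / 2"
  define s where "s = (hi - lo) / 2"
  have xB: "c - r < x" "x < c + r" using B(3) by (auto simp: ball_eq_greaterThanLessThan)
  have spos: "0 < s" unfolding s_def lo_def hi_def using B(2) by simp
  have e1: "d - s = lo" "d + s = hi" unfolding d_def s_def by (simp_all add: field_simps)
  have De: "ball d s = {lo<..<hi}" unfolding ball_eq_greaterThanLessThan e1 ..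
  have yD: "y \<in> ball d s" unfolding De lo_def hi_def by (simp add: min_less_iff_disj less_max_iff_disj)
  have BD: "B \<subseteq> ball d s" unfolding B(1) ball_eq_greaterThanLessThan e1 lo_def hi_def by auto
  have DW: "ball d s \<subseteq> B \<union> W0"
  proof
    fix z assume z: "z \<in> ball d s"
    show "z \<in> B \<union> W0"
    proof (cases "z \<in> B")
      case False
      hence "z \<le> c - r \<or> c + r \<le> z" unfolding B(1) ball_eq_greaterThanLessThan by auto
      moreover have "lo < z" "z < hi" using z De by auto
      ultimately have "\<bar>z\<bar> < n + \<bar>y\<bar> + 2" using xB x unfolding lo_def hi_def by (auto simp: abs_if split: if_splits)
      thus ?thesis unfolding W0_def by (simp add: dist_real_def)
    qed simp
  qed
  define iDR where "iDR = enn2real (\<integral>\<^sup>+ z\<in>ball d s. ennreal \<bar>f z\<bar> \<partial>M)"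
  have iD: "(\<integral>\<^sup>+ z\<in>ball d s. ennreal \<bar>f z\<bar> \<partial>M) = ennreal iDR" "0 \<le> iDR"
    unfolding iDR_def using li_props(2)[OF li spos, of d] by (auto simp: less_top)
  define mDR where "mDR = measure M (ball d s)"
  have mD: "emeasure M (ball d s) = ennreal mDR" "0 < mDR"
    unfolding mDR_def using ball_meas[OF pos spos] by auto
  have "(\<integral>\<^sup>+ z\<in>B. ennreal \<bar>f z\<bar> \<partial>M) \<le> (\<integral>\<^sup>+ z\<in>ball d s. ennreal \<bar>f z\<bar> \<partial>M)"
    by (intro nn_integral_mono mult_left_mono) (use BD in \<open>auto simp: indicator_def\<close>)
  hence iRD: "iR \<le> iDR" using iB iD by (simp add: ennreal_le_iff)
  have W0M: "W0 \<in> sets M" unfolding W0_def using sb by simp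
  have BM: "B \<in> sets M" unfolding B(1) using sb by simp
  have "emeasure M (ball d s) \<le> emeasure M (B \<union> W0)"
    by (rule emeasure_mono[OF DW]) (use W0M BM in auto)
  also have "\<dots> \<le> emeasure M B + emeasure M W0" by (rule emeasure_subadditive) (use W0M BM in auto)
  finally have le1: "emeasure M (ball d s) \<le> emeasure M B + emeasure M W0" .
  have "ennreal mDR \<le> ennreal (mR + C)"
    using le1 mD(1) mB(1) W0e(1) ennreal_plus[of mR C] mB(2) W0e(2) by simp
  hence mDle: "mDR \<le> mR + C" using ennreal_le_iff[of "mR + C" mDR] mB(2) W0e(2) by simp
  have "ball d s \<in> {ball c r | c r. 0 < r \<and> y \<in> ball c r}" using spos yD by blast
  hence "(\<integral>\<^sup>+ z\<in>ball d s. ennreal \<bar>f z\<bar> \<partial>M) / emeasure M (ball d s) \<le> max_op M f y"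
    unfolding max_op_def by (rule SUP_upper)
  hence "ennreal (iDR / mDR) \<le> ennreal K" using iD mD K divide_ennreal[of iDR mDR] by simp
  hence "iDR / mDR \<le> K" using K by (simp add: ennreal_le_iff)
  hence "iDR \<le> K * mDR" using mD(2) by (simp add: divide_le_eq)
  also have "\<dots> \<le> K * (mR + C)" using mDle K(2) by (simp add: mult_left_mono)
  finally have ineq2: "iR \<le> K * mR + K * C" using iRD by (simp add: algebra_simps)
  show ?thesis
  proof (cases "B \<subseteq> ball 0 R")
    case True
    have "ennreal lam * emeasure M B = ennreal (lam * mR)" using mB lam by (simp add: ennreal_mult)
    also have "\<dots> < ennreal iR"
    proof -
      have "lam * mR < lam' * mR" using mB(2) unfolding lam'_def
        using K(2) kcd by (simp add: mult_strict_right_mono)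
      moreover have "0 < lam * mR" using lam mB(2) by simp
      ultimately show ?thesis using ineq1 by (intro ennreal_lessI) linarith+
    qed
    also have "\<dots> = (\<integral>\<^sup>+z\<in>B. ennreal \<bar>f z\<bar> * indicator (ball 0 R) z \<partial>M)"
      unfolding iB(1)[symmetric] by (intro nn_integral_cong) (use True in \<open>auto simp: indicator_def\<close>)
    finally show ?thesis unfolding R_def[symmetric] using B True by blast
  next
    case False
    then obtain z where z: "z \<in> B" "z \<notin> ball 0 R" by blast
    hence "R \<le> \<bar>z\<bar>" by (simp add: dist_real_def)
    moreover have "c - r < z" "z < c + r" using z(1) B(1) by (auto simp: ball_eq_greaterThanLessThan)
    ultimately have "x + 1 < c + r \<or> c - r < x - 1" using x unfolding R_def by (auto simp: abs_if split: if_splits)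
    hence "ball (x + 1/2) (1/2) \<subseteq> B \<or> ball (x - 1/2) (1/2) \<subseteq> B"
      using xB unfolding B(1) ball_eq_greaterThanLessThan by auto
    hence "emeasure M (ball (x + 1/2) (1/2)) \<le> emeasure M B \<or> emeasure M (ball (x - 1/2) (1/2)) \<le> emeasure M B"
      using BM emeasure_mono by blast
    hence "\<delta>1 \<le> mR \<or> \<delta>2 \<le> mR" using d1 d2 mB by (auto simp: ennreal_le_iff)
    hence dm: "\<delta> \<le> mR" unfolding \<delta>_def by auto
    have "K * C \<le> K * C / \<delta> * mR"
    proof -
      have "1 \<le> mR / \<delta>" using dm dpos by simp
      hence "K * C * 1 \<le> K * C * (mR / \<delta>)" using K(2) W0e(2) by (intro mult_left_mono) auto
      thus ?thesis by simp
    qed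
    moreover have "lam' * mR = lam * mR + K * mR + K * C / \<delta> * mR + mR"
      unfolding lam'_def by (simp add: algebra_simps)
    moreover have "0 \<le> lam * mR" using lam mB(2) by simp
    ultimately have False using ineq1 ineq2 mB(2) by linarith
    thus ?thesis ..
  qed
qed



lemma local_null:
  fixes M :: "real measure" and f :: "real \<Rightarrow> real"
  assumes sb: "sets M = sets borel"
    and pos: "\<And>c r. 0 < r \<Longrightarrow> 0 < emeasure M (ball c r) \<and> emeasure M (ball c r) < \<infinity>"
    and li: "loc_integrable M f"
    and y: "max_op M f y \<noteq> \<infinity>"
    and n: "0 < n" and EM: "E \<in> sets M" and Einf: "\<And>x. x \<in> E \<Longrightarrow> max_op M f x = \<infinity>"
  shows "E \<inter> ball 0 n \<in> null_sets M"
proof -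
  define K where "K = enn2real (max_op M f y)"
  have K: "max_op M f y = ennreal K" "0 \<le> K" unfolding K_def using y by (auto simp: less_top)
  define R where "R = n + \<bar>y\<bar> + 3"
  have Rpos: "0 < R" unfolding R_def using n by simp
  define W where "W = ball (0::real) R"
  define g where "g z = ennreal \<bar>f z\<bar> * indicator W z" for z
  have gm: "g \<in> borel_measurable M" unfolding g_def W_def using li_props(1)[OF li Rpos] .
  define cR where "cR = enn2real (\<integral>\<^sup>+z. g z \<partial>M)"
  have cfin: "(\<integral>\<^sup>+z. g z \<partial>M) = ennreal cR" "0 \<le> cR"
    unfolding cR_def g_def W_def using li_props(2)[OF li Rpos] by (auto simp: less_top)
  have WM: "W \<in> sets borel" unfolding W_def by simp
  have Wfin: "emeasure M W < \<infinity>" unfolding W_def using pos Rpos by simp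
  define EN where "EN = E \<inter> ball 0 n"
  have ENM: "EN \<in> sets M" unfolding EN_def using EM sb by simp
  have bnd: "ennreal lam * emeasure M EN \<le> 2 * ennreal cR" if lam: "0 < lam" for lam
  proof -
    define U where "U = \<Union>{B. (\<exists>c r. 0<r \<and> B = ball c r) \<and> B \<subseteq> W \<and>
      ennreal lam * emeasure M B < (\<integral>\<^sup>+z\<in>B. g z \<partial>M)}"
    have "open U" unfolding U_def by auto
    hence UM: "U \<in> sets M" using sb by simp
    have sub: "EN \<subseteq> U"
    proof
      fix x assume "x \<in> EN"
      hence xx: "\<bar>x\<bar> < n" "max_op M f x = \<infinity>" unfolding EN_def using Einf by (auto simp: dist_real_def)
      obtain B where "(\<exists>c r. 0<r \<and> B = ball c r) \<and> B \<subseteq> W \<and> x \<in> B \<and>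
          ennreal lam * emeasure M B < (\<integral>\<^sup>+z\<in>B. g z \<partial>M)"
        using localize[OF sb pos li K n xx(1) xx(2) lam] unfolding g_def W_def R_def by blast
      thus "x \<in> U" unfolding U_def by blast
    qed
    have "ennreal lam * emeasure M EN \<le> ennreal lam * emeasure M U"
      by (intro mult_left_mono emeasure_mono sub UM) simp
    also have "\<dots> \<le> 2 * (\<integral>\<^sup>+z. g z \<partial>M)"
      unfolding U_def by (rule weak_type[OF sb Wfin WM gm lam])
    finally show ?thesis using cfin by simp
  qed
  have bM: "ball (0::real) n \<in> sets M" using sb by simp
  have "emeasure M EN \<le> emeasure M (ball 0 n)"
    by (rule emeasure_mono[OF _ bM]) (simp add: EN_def)
  also have "\<dots> < \<infinity>" using pos n by simp
  finally have ENfin: "emeasure M EN < \<infinity>" .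
  define tR where "tR = enn2real (emeasure M EN)"
  have t: "emeasure M EN = ennreal tR" "0 \<le> tR" unfolding tR_def using ENfin by (auto simp: less_top)
  have "tR = 0"
  proof (rule ccontr)
    assume "tR \<noteq> 0"
    hence tp: "0 < tR" using t by simp
    define lam where "lam = (2 * cR + 1) / tR"
    have lp: "0 < lam" unfolding lam_def using tp cfin by simp
    have "ennreal (lam * tR) \<le> ennreal (2 * cR)"
      using bnd[OF lp] t cfin lp by (simp add: ennreal_mult ennreal_mult')
    hence "lam * tR \<le> 2 * cR" using cfin by (simp add: ennreal_le_iff)
    moreover have "lam * tR = 2 * cR + 1" unfolding lam_def using tp by simp
    ultimately show False by simp
  qed
  hence "emeasure M EN = 0" using t by simp
  thus ?thesis using ENM unfolding EN_def by (simp add: null_sets_def)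
qed



theorem proposition6p2p1:
  fixes M :: "real measure"
  assumes "sets M = sets borel"
    and "\<And>c r. 0 < r \<Longrightarrow> 0 < emeasure M (ball c r) \<and> emeasure M (ball c r) < \<infinity>"
  shows "dichotomy_property M"
  unfolding dichotomy_property_def
proof (intro allI impI)
  fix f :: "real \<Rightarrow> real"
  assume li: "loc_integrable M f"
  show "emeasure M {x \<in> space M. max_op M f x = \<infinity>} = 0 \<or> (\<forall>x. max_op M f x = \<infinity>)"
  proof (cases "\<forall>x. max_op M f x = \<infinity>")
    case True thus ?thesis by simp
  next
    case False
    then obtain y where y: "max_op M f y \<noteq> \<infinity>" by blast
    define E where "E = {x \<in> space M. max_op M f x = \<infinity>}"
    have "emeasure M E = 0"
    proof (cases "E \<in> sets M")
      case False thus ?thesis by (simp add: emeasure_notin_sets)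
    next
      case True
      have nul: "E \<inter> ball 0 (real (Suc k)) \<in> null_sets M" for k
        by (rule local_null[OF assms li y _ True]) (auto simp: E_def)
      have "E = (\<Union>k. E \<inter> ball 0 (real (Suc k)))"
      proof (intro equalityI subsetI)
        fix x assume x: "x \<in> E"
        obtain k where "\<bar>x\<bar> < real k" using reals_Archimedean2 by blast
        hence "x \<in> ball 0 (real (Suc k))" by (simp add: dist_real_def)
        thus "x \<in> (\<Union>k. E \<inter> ball 0 (real (Suc k)))" using x by blast
      qed blast
      hence "E \<in> null_sets M" using nul by (metis null_sets_UN)
      thus ?thesis by (rule null_setsD1)
    qed
    thus ?thesis unfolding E_def by simp
  qed
qed

end
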